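(* In the multi-parameter setting described in the context, for every $\theta\in\Theta$ one has $H_\theta\le C_\Upsilon(\theta)$ in the sense of positive semidefinite order of $p\times p$ matrices, with equality if and only if $\bigl\langle \frac{\partial w_j}{\partial\theta^l}(\theta)\big|w_k(\theta)\bigr\rangle=0$ for all $l$ and all $j,k$ with $p_j(\theta)>0$ and $p_k(\theta)>0$.
   Context: Let $\Theta\subseteq\mathbb{R}^p$ be open and $D\ge1$. For $\theta=(\theta^1,\dots,\theta^p)\in\Theta$ let $\Phi_\theta$ be a quantum channel on $D\times D$ complex matrices and $\rho_0=|\psi_0\rangle\langle\psi_0|$ a fixed pure input state. Canonical Kraus operators are $D\times D$ matrices $\Upsilon_1(\theta),\dots,\Upsilon_D(\theta)$, differentiable in $\theta$, with $\sum_k\Upsilon_k^\dagger\Upsilon_k=\mathbb{I}$, $\Phi_\theta(\rho)=\sum_k\Upsilon_k\rho\Upsilon_k^\dagger$, and $\mathrm{tr}\{\Upsilon_k\rho_0\Upsilon_j^\dagger\}=\delta_{jk}p_k(\theta)$. Write $\Upsilon_k(\theta)|\psi_0\rangle=\sqrt{p_k(\theta)}|w_k(\theta)\rangle$ with $\{|w_k(\theta)\rangle\}$ an orthonormal basis of $\mathbb{C}^D$ differentiable in $\theta$; the output is $\rho_\theta=\sum_kp_k|w_k\rangle\langle w_k|$. Each $p_k$ is assumed either identically zero or strictly positive on $\Theta$. The multi-parameter Sarovar–Milburn bound is the $p\times p$ matrix with entries $C_\Upsilon(\theta)_{jk}=4\sum_l\mathrm{Re}\,\mathrm{tr}\{\frac{\partial\Upsilon_l}{\partial\theta^j}\rho_0(\frac{\partial\Upsilon_l}{\partial\theta^k})^\dagger\}$.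 The SLD quantum information is the $p\times p$ matrix with entries $(H_\theta)_{jk}=\mathrm{Re}\,\mathrm{tr}\{\lambda^j\rho_\theta\lambda^k\}$, where $\lambda^j$ is a Hermitian solution of $\frac{\partial\rho_\theta}{\partial\theta^j}=\frac12(\rho_\theta\lambda^j+\lambda^j\rho_\theta)$. *)

theory Defs
  imports "HOL-Analysis.Analysis"
begin

definition adj :: "complex^'d^'d \<Rightarrow> complex^'d^'d" where
  "adj A = (\<chi> i j. cnj (A $ j $ i))"

definition outer :: "complex^'d \<Rightarrow> complex^'d \<Rightarrow> complex^'d^'d" where
  "outer u v = (\<chi> i j. u $ i * cnj (v $ j))"

definition cinner :: "complex^'d \<Rightarrow> complex^'d \<Rightarrow> complex" where
  "cinner u v = (\<Sum>i\<in>UNIV. cnj (u $ i) * v $ i)"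

definition pd :: "'p::finite \<Rightarrow> (real^'p \<Rightarrow> 'b::real_normed_vector) \<Rightarrow> real^'p \<Rightarrow> 'b" where
  "pd j f \<theta> = frechet_derivative f (at \<theta>) (axis j 1)"

definition out_state :: "('k::finite \<Rightarrow> 'a \<Rightarrow> complex^'d^'d) \<Rightarrow> complex^'d \<Rightarrow> 'a \<Rightarrow> complex^'d^'d" where
  "out_state Ups psi0 \<theta> = (\<Sum>k\<in>UNIV. Ups k \<theta> ** outer psi0 psi0 ** adj (Ups k \<theta>))"

definition SM_bound :: "('d::finite \<Rightarrow> real^'p \<Rightarrow> complex^'d^'d) \<Rightarrow> complex^'d \<Rightarrow> real^'p \<Rightarrow> real^'p^'p" where
  "SM_bound Ups psi0 \<theta> = (\<chi> j k. 4 * (\<Sum>l\<in>UNIV.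
      Re (trace (pd j (Ups l) \<theta> ** outer psi0 psi0 ** adj (pd k (Ups l) \<theta>)))))"

text \<open>SLD quantum information matrix computed from given SLDs lam^j.\<close>
definition SLD_info :: "('p::finite \<Rightarrow> complex^'d^'d) \<Rightarrow> complex^'d^'d \<Rightarrow> real^'p^'p" where
  "SLD_info lam rho = (\<chi> j k. Re (trace (lam j ** rho ** lam k)))"

definition psd_le :: "real^'p^'p \<Rightarrow> real^'p^'p \<Rightarrow> bool" where
  "psd_le A B \<longleftrightarrow> (\<forall>x::real^'p. 0 \<le> x \<bullet> ((B - A) *v x))"

end

theory Submission
  imports Defs
begin

lemma cinner_add_right: "cinner u (v + w) = cinner u v + cinner u w"
  by (simp add: cinner_def distrib_left sum.distrib)
lemma cinner_add_left: "cinner (u + v) w = cinner u w + cinner v w"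
  by (simp add: cinner_def distrib_right sum.distrib)
lemma cinner_diff_right: "cinner u (v - w) = cinner u v - cinner u w"
  by (simp add: cinner_def right_diff_distrib sum_subtractf)
lemma cinner_diff_left: "cinner (u - v) w = cinner u w - cinner v w"
  by (simp add: cinner_def left_diff_distrib sum_subtractf)
lemma cinner_scaleR_right: "cinner u (c *\<^sub>R v) = of_real c * cinner u v"
  by (simp add: cinner_def sum_distrib_left) (simp add: scaleR_conv_of_real mult_ac)
lemma cinner_scaleR_left: "cinner (c *\<^sub>R u) v = of_real c * cinner u v"
  by (simp add: cinner_def sum_distrib_left) (simp add: scaleR_conv_of_real mult_ac)
lemma cinner_smult_right: "cinner u (c *s v) = c * cinner u v"
  by (simp add: cinner_def sum_distrib_left mult_ac)
lemma cinner_smult_left: "cinner (c *s u) v = cnj c * cinner u v"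
  by (simp add: cinner_def sum_distrib_left mult_ac)
lemma cinner_sum_right: "cinner u (sum f A) = (\<Sum>a\<in>A. cinner u (f a))"
  by (simp add: cinner_def sum_component sum_distrib_left) (rule sum.swap)
lemma cinner_sum_left: "cinner (sum f A) u = (\<Sum>a\<in>A. cinner (f a) u)"
  by (simp add: cinner_def sum_component sum_distrib_right) (rule sum.swap)
lemma cinner_zero_right[simp]: "cinner u 0 = 0" by (simp add: cinner_def)
lemma cinner_zero_left[simp]: "cinner 0 u = 0" by (simp add: cinner_def)
lemma cnj_cinner: "cnj (cinner u v) = cinner v u"
  by (simp add: cinner_def mult.commute)
lemma Re_cinner_sym: "Re (cinner u v) = Re (cinner v u)"
  by (subst cnj_cinner[symmetric]) simp
lemma cinner_self_eq: "cinner u u = of_real (\<Sum>i\<in>UNIV. (cmod (u$i))^2)"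
  unfolding cinner_def of_real_sum
  by (rule sum.cong[OF refl], subst complex_norm_square, simp add: mult.commute)
lemma cinner_self_ge0: "0 \<le> Re (cinner u u)"
  by (simp add: cinner_self_eq sum_nonneg)
lemma cinner_self_zero: "Re (cinner u u) = 0 \<Longrightarrow> u = 0"
proof -
  assume "Re (cinner u u) = 0"
  hence "(\<Sum>i\<in>UNIV. (cmod (u$i))^2) = 0" by (simp add: cinner_self_eq)
  hence "\<forall>i\<in>UNIV. (cmod (u$i))^2 = 0" by (subst (asm) sum_nonneg_eq_0_iff) auto
  thus "u = 0" by (simp add: vec_eq_iff)
qed

lemma outer_mv: "outer x y *v z = cinner y z *s x"
  by (simp add: vec_eq_iff outer_def matrix_vector_mult_def cinner_def sum_distrib_left mult_ac)
lemma trace_outer_mult: "trace (outer a b ** M) = cinner b (M *v a)"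
  by (simp add: trace_def outer_def matrix_matrix_mult_def cinner_def matrix_vector_mult_def
      sum_distrib_left mult_ac) (rule sum.swap)
lemma U_outer: "U ** outer u u ** adj U = outer (U *v u) (U *v u)"
  by (simp add: vec_eq_iff outer_def matrix_matrix_mult_def matrix_vector_mult_def adj_def
      sum_distrib_left sum_distrib_right mult_ac)
lemma trace_cyc: "trace (A ** B) = trace (B ** (A::complex^'d^'d))"
  by (rule trace_mul_sym)
lemma mv_herm: "adj M = M \<Longrightarrow> cinner u (M *v v) = cinner (M *v u) v"
proof -
  assume h: "adj M = M"
  have "cinner u (M *v v) = cinner (adj M *v u) v"
    by (simp add: cinner_def adj_def matrix_vector_mult_def sum_distrib_left sum_distrib_right mult_ac)
       (rule sum.swap)
  thus ?thesis using h by simp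
qed

lemma scaleR_complex: "c *\<^sub>R (z::complex) = of_real c * z"
  by (rule scaleR_conv_of_real)

lemma bl_mv: "bounded_linear (\<lambda>A::complex^'d^'d. A *v x)"
  unfolding linear_conv_bounded_linear[symmetric]
  by (rule linearI) (simp_all add: vec_eq_iff matrix_vector_mult_def sum.distrib distrib_right
      scaleR_sum_right)

lemma bbl_outer: "bounded_bilinear (outer :: complex^'d \<Rightarrow> complex^'d \<Rightarrow> complex^'d^'d)"
  unfolding bilinear_conv_bounded_bilinear[symmetric] bilinear_def
  by (auto intro!: linearI simp: vec_eq_iff outer_def distrib_left distrib_right scaleR_complex)

lemma bbl_cinner: "bounded_bilinear (cinner :: complex^'d \<Rightarrow> complex^'d \<Rightarrow> complex)"
  unfolding bilinear_conv_bounded_bilinear[symmetric] bilinear_def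
  by (auto intro!: linearI simp: cinner_add_left cinner_add_right cinner_scaleR_left
      cinner_scaleR_right scaleR_complex)

lemma pd_has: "(f has_derivative f') (at t) \<Longrightarrow> pd j f t = f' (axis j 1)"
  unfolding pd_def by (simp add: frechet_derivative_at[symmetric])

lemma pd_eq_on: assumes "f differentiable at t" "open S" "t \<in> S" "\<And>x. x \<in> S \<Longrightarrow> f x = g x"
  shows "pd j f t = pd j g t"
  unfolding pd_def using frechet_derivative_transform_within_open[OF assms] by simp

lemma pd_const_on: assumes "open S" "t \<in> S" "\<And>x. x \<in> S \<Longrightarrow> f x = c"
  shows "pd j f t = 0"
proof -
  have "pd j (\<lambda>_. c) t = pd j f t"
    by (rule pd_eq_on) (use assms in auto)
  moreover have "pd j (\<lambda>_. c) t = 0" by (rule pd_has[OF has_derivative_const, simplified])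
  ultimately show ?thesis by simp
qed

lemma pd_cinner: assumes "f differentiable at t" "g differentiable at t"
  shows "pd j (\<lambda>x. cinner (f x) (g x)) t = cinner (pd j f t) (g t) + cinner (f t) (pd j g t)"
proof -
  have "((\<lambda>x. cinner (f x) (g x)) has_derivative
     (\<lambda>h. cinner (f t) (frechet_derivative g (at t) h) + cinner (frechet_derivative f (at t) h) (g t))) (at t)"
    by (rule bounded_bilinear.FDERIV[OF bbl_cinner])
       (use assms frechet_derivative_works in auto)
  from pd_has[OF this] show ?thesis by (simp add: pd_def)
qed


lemma trace_AuuB: "trace (A ** outer u u ** adj B) = cinner (B *v u) (A *v u)"
  by (simp add: trace_def outer_def matrix_matrix_mult_def matrix_vector_mult_def adj_def cinner_def
      sum_distrib_left sum_distrib_right mult_ac)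

lemma matrix_add_rdistrib': "((A::complex^'n^'m) + B) ** C = A ** C + B ** C"
  by (simp add: vec_eq_iff matrix_matrix_mult_def distrib_right sum.distrib)
lemma mv_scaleR: "(c *\<^sub>R (A::complex^'d^'d)) *v u = c *\<^sub>R (A *v u)"
  by (simp add: vec_eq_iff matrix_vector_mult_def scaleR_sum_right)

lemma mmult_sum_left: "A ** sum M S = (\<Sum>b\<in>S. A ** M b)"
  by (induction S rule: infinite_finite_induct) (auto simp: matrix_add_ldistrib)
lemma mmult_sum_right: "sum M S ** (A::complex^'d^'d) = (\<Sum>b\<in>S. M b ** A)"
  by (induction S rule: infinite_finite_induct) (auto simp: matrix_add_rdistrib')
lemma trace_sum: "trace (sum M S) = (\<Sum>b\<in>S. trace (M b))"
  by (simp add: trace_def sum_component) (rule sum.swap)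
lemma mv_sum_left: "sum M S *v x = (\<Sum>b\<in>S. M b *v x)"
  by (induction S rule: infinite_finite_induct) (auto simp: matrix_vector_mult_add_rdistrib)
lemma trace_scaleR: "trace (c *\<^sub>R (M::complex^'d^'d)) = c *\<^sub>R trace M"
  by (simp add: trace_def scaleR_sum_right)
lemma scaleR_mmult: "(c *\<^sub>R (M::complex^'d^'d)) ** N = c *\<^sub>R (M ** N)"
  by (simp add: vec_eq_iff matrix_matrix_mult_def scaleR_sum_right)

lemma out_state_eq: "out_state Ups psi0 t = (\<Sum>b\<in>UNIV. outer (Ups b t *v psi0) (Ups b t *v psi0))"
  by (simp add: out_state_def U_outer)

lemma axis_sum: "(\<Sum>j\<in>UNIV. (axis l (1::real)) $ j *\<^sub>R f j) = (f l :: 'a::real_vector)"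
proof -
  have "\<And>j. (axis l (1::real)) $ j *\<^sub>R f j = (if j = l then f l else 0)"
    by (simp add: axis_def)
  thus ?thesis by simp
qed

lemma Re_cinner_sums:
  "Re (cinner (\<Sum>j\<in>UNIV. (x$j::real) *\<^sub>R a j) (\<Sum>k\<in>UNIV. x$k *\<^sub>R b k))
   = (\<Sum>j\<in>UNIV. \<Sum>k\<in>UNIV. x$j * x$k * Re (cinner (a j) (b k)))"
  by (simp add: cinner_sum_left cinner_sum_right cinner_scaleR_left cinner_scaleR_right
      sum_distrib_left mult_ac) (subst sum.swap, simp add: mult_ac)

lemma quad_form: "(x::real^'p) \<bullet> (M *v x) = (\<Sum>j\<in>UNIV. \<Sum>k\<in>UNIV. x$j * x$k * M$j$k)"
  by (simp add: inner_vec_def matrix_vector_mult_def sum_distrib_left mult_ac)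

lemma mv_scaleR_sum: "(\<Sum>j\<in>UNIV. (x$j::real) *\<^sub>R (M j::complex^'d^'d)) *v u = (\<Sum>j\<in>UNIV. x$j *\<^sub>R (M j *v u))"
  by (simp add: mv_sum_left mv_scaleR)

lemma triple_swap: "(\<Sum>b\<in>B. \<Sum>j\<in>J. \<Sum>k\<in>K. (c j k::real) * f b j k) = (\<Sum>j\<in>J. \<Sum>k\<in>K. c j k * (\<Sum>b\<in>B. f b j k))"
  by (simp add: sum_distrib_left) (subst sum.swap, rule sum.cong[OF refl], subst sum.swap, rule refl)

lemma onb_ext:
  fixes w :: "'d \<Rightarrow> complex^'d"
  assumes o: "\<And>a b. cinner (w a) (w b) = (if a = b then 1 else 0)"
    and e: "\<And>a. cinner (w a) u = cinner (w a) u'"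
  shows "u = u'"
proof -
  define W :: "complex^'d^'d" where "W = (\<chi> a i. cnj (w a $ i))"
  have Wu: "W *v x = (\<chi> a. cinner (w a) x)" for x
    by (simp add: W_def matrix_vector_mult_def cinner_def)
  have "W ** adj W = mat 1"
    by (simp add: vec_eq_iff W_def adj_def matrix_matrix_mult_def mat_def o[unfolded cinner_def])
  hence WW: "adj W ** W = mat 1" using matrix_left_right_inverse by blast
  have "W *v u = W *v u'" by (simp add: Wu e)
  hence "adj W *v (W *v u) = adj W *v (W *v u')" by simp
  thus ?thesis by (simp add: matrix_vector_mul_assoc WW)
qed

lemma diff_cinner: assumes "f differentiable at t" "g differentiable at t"
  shows "(\<lambda>x. cinner (f x) (g x)) differentiable at t"
  using bounded_bilinear.FDERIV[OF bbl_cinner] assms unfolding differentiable_def by blast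

lemma mv_smult: "(A::complex^'n^'m) *v (c *s x) = c *s (A *v x)"
  by (simp add: vec_eq_iff matrix_vector_mult_def sum_distrib_left mult_ac)

theorem theorem2p9:
  fixes \<Theta> :: "(real^'p) set"
    and Ups :: "'d \<Rightarrow> real^'p \<Rightarrow> complex^'d^'d"
    and psi0 :: "complex^'d"
    and pr :: "'d \<Rightarrow> real^'p \<Rightarrow> real"
    and w :: "'d \<Rightarrow> real^'p \<Rightarrow> complex^'d"
    and lam :: "'p \<Rightarrow> complex^'d^'d"
    and \<theta> :: "real^'p"
  assumes open_Theta: "open \<Theta>"
    and psi0_unit: "cinner psi0 psi0 = 1"
    and Ups_diff: "\<And>k t. t \<in> \<Theta> \<Longrightarrow> Ups k differentiable (at t)"
    and Kraus_complete: "\<And>t. t \<in> \<Theta> \<Longrightarrow> (\<Sum>k\<in>UNIV. adj (Ups k t) ** Ups k t) = mat 1"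
    and canonical: "\<And>j k t. t \<in> \<Theta> \<Longrightarrow>
        trace (Ups k t ** outer psi0 psi0 ** adj (Ups j t))
          = (if j = k then complex_of_real (pr k t) else 0)"
    and Ups_psi0: "\<And>k t. t \<in> \<Theta> \<Longrightarrow>
        Ups k t *v psi0 = complex_of_real (sqrt (pr k t)) *s w k t"
    and w_orthonormal: "\<And>j k t. t \<in> \<Theta> \<Longrightarrow>
        cinner (w j t) (w k t) = (if j = k then 1 else 0)"
    and w_diff: "\<And>k t. t \<in> \<Theta> \<Longrightarrow> w k differentiable (at t)"
    and pr_dichotomy: "\<And>k. (\<forall>t\<in>\<Theta>. pr k t = 0) \<or> (\<forall>t\<in>\<Theta>. pr k t > 0)"
    and theta_in: "\<theta> \<in> \<Theta>"
    and lam_herm: "\<And>j. adj (lam j) = lam j"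
    and lam_SLD: "\<And>j. pd j (out_state Ups psi0) \<theta>
        = (1/2) *\<^sub>R (out_state Ups psi0 \<theta> ** lam j + lam j ** out_state Ups psi0 \<theta>)"
  shows "psd_le (SLD_info lam (out_state Ups psi0 \<theta>)) (SM_bound Ups psi0 \<theta>)
       \<and> (SLD_info lam (out_state Ups psi0 \<theta>) = SM_bound Ups psi0 \<theta>
            \<longleftrightarrow> (\<forall>l j k. pr j \<theta> > 0 \<longrightarrow> pr k \<theta> > 0 \<longrightarrow>
                    cinner (pd l (w j) \<theta>) (w k \<theta>) = 0))"
proof -
  define \<rho> where "\<rho> = out_state Ups psi0"
  define v where "v b t = Ups b t *v psi0" for b t
  define s where "s b = sqrt (pr b \<theta>)" for b
  define dv where "dv l b = pd l (v b) \<theta>" for l b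
  define C where "C = SM_bound Ups psi0 \<theta>"
  define H where "H = SLD_info lam (\<rho> \<theta>)"
  have v_has: "(v b has_derivative (\<lambda>h. frechet_derivative (Ups b) (at t) h *v psi0)) (at t)"
    if "t \<in> \<Theta>" for b t
    unfolding v_def[abs_def]
    by (rule bounded_linear.has_derivative[OF bl_mv])
       (use Ups_diff[OF that] frechet_derivative_works in blast)
  have v_diff: "v b differentiable at t" if "t \<in> \<Theta>" for b t
    using v_has[OF that] differentiable_def by blast
  have dv_eq: "dv l b = pd l (Ups b) \<theta> *v psi0" for l b
    unfolding dv_def using pd_has[OF v_has[OF theta_in]] by (simp add: pd_def)
  have v_eq: "v b t = complex_of_real (sqrt (pr b t)) *s w b t" if "t \<in> \<Theta>" for b t
    using Ups_psi0[OF that] by (simp add: v_def)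
  have pr_cases: "pr b \<theta> = 0 \<and> (\<forall>t\<in>\<Theta>. pr b t = 0) \<or> pr b \<theta> > 0" for b
    using pr_dichotomy[of b] theta_in by auto
  have pr_nn: "pr b \<theta> \<ge> 0" for b
    using pr_cases[of b] by auto
  have s_nn: "s b \<ge> 0" for b using pr_nn[of b] by (simp add: s_def)
  have s_sq: "s b * s b = pr b \<theta>" for b
    using pr_nn[of b] by (simp add: s_def)
  have v_th: "v b \<theta> = complex_of_real (s b) *s w b \<theta>" for b
    using v_eq[OF theta_in] by (simp add: s_def)
  have wo: "cinner (w a \<theta>) (w b \<theta>) = (if a = b then 1 else 0)" for a b
    using w_orthonormal[OF theta_in] .
  have wv: "cinner (w a \<theta>) (v b \<theta>) = (if a = b then complex_of_real (s b) else 0)" for a b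
    by (simp add: v_th cinner_smult_right wo)
  have vw: "cinner (v b \<theta>) (w a \<theta>) = (if a = b then complex_of_real (s b) else 0)" for a b
    by (simp add: v_th cinner_smult_left wo)
  have zero_case: "v b \<theta> = 0 \<and> dv l b = 0" if "pr b \<theta> = 0" for b l
  proof -
    have z: "\<forall>t\<in>\<Theta>. pr b t = 0" using pr_cases[of b] that by auto
    have "\<And>t. t \<in> \<Theta> \<Longrightarrow> v b t = 0" using v_eq z by simp
    thus ?thesis unfolding dv_def using pd_const_on[OF open_Theta theta_in] theta_in by blast
  qed
  have C_entry: "C$j$k = 4 * (\<Sum>b\<in>UNIV. Re (cinner (dv j b) (dv k b)))" for j k
    by (simp add: C_def SM_bound_def trace_AuuB dv_eq[symmetric] Re_cinner_sym)
  have H_def': "H$j$k = Re (trace (lam j ** \<rho> \<theta> ** lam k))" for j k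
    by (simp add: H_def SLD_info_def)
  have H_entry: "H$j$k = (\<Sum>b\<in>UNIV. Re (cinner (lam j *v v b \<theta>) (lam k *v v b \<theta>)))" for j k
  proof -
    have "trace (lam j ** \<rho> \<theta> ** lam k) = (\<Sum>b\<in>UNIV. trace (lam j ** outer (v b \<theta>) (v b \<theta>) ** adj (lam k)))"
      by (simp add: \<rho>_def out_state_eq v_def lam_herm mmult_sum_left mmult_sum_right trace_sum)
    thus ?thesis by (simp add: H_def' trace_AuuB Re_cinner_sym)
  qed
  have H_sym: "H$k$j = H$j$k" for j k
    by (simp add: H_entry Re_cinner_sym)
  have rho_deriv: "pd l \<rho> \<theta> = (\<Sum>b\<in>UNIV. outer (dv l b) (v b \<theta>) + outer (v b \<theta>) (dv l b))" for l
  proof -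
    have r: "\<rho> = (\<lambda>t. \<Sum>b\<in>UNIV. outer (v b t) (v b t))"
      by (simp add: \<rho>_def out_state_eq v_def fun_eq_iff)
    have "(\<rho> has_derivative (\<lambda>h. \<Sum>b\<in>UNIV. outer (v b \<theta>) (frechet_derivative (v b) (at \<theta>) h)
              + outer (frechet_derivative (v b) (at \<theta>) h) (v b \<theta>))) (at \<theta>)"
      unfolding r
      by (rule has_derivative_sum, rule bounded_bilinear.FDERIV[OF bbl_outer])
         (use v_diff[OF theta_in] frechet_derivative_works in blast)+
    from pd_has[OF this, of l] show ?thesis by (simp add: dv_def pd_def add.commute)
  qed
  have F6: "2 * (\<Sum>b\<in>UNIV. Re (cinner (lam k *v v b \<theta>) (dv j b))) = H$j$k" for j k
  proof -
    have e: "trace (pd j \<rho> \<theta> ** lam k) = trace (((1/2) *\<^sub>R (\<rho> \<theta> ** lam j + lam j ** \<rho> \<theta>)) ** lam k)"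
      using lam_SLD[of j] by (simp add: \<rho>_def)
    have l: "trace (pd j \<rho> \<theta> ** lam k) = (\<Sum>b\<in>UNIV. cinner (v b \<theta>) (lam k *v dv j b) + cinner (dv j b) (lam k *v v b \<theta>))"
      by (simp add: rho_deriv mmult_sum_right matrix_add_rdistrib' trace_sum trace_add trace_outer_mult)
    have l2: "Re (trace (pd j \<rho> \<theta> ** lam k)) = 2 * (\<Sum>b\<in>UNIV. Re (cinner (lam k *v v b \<theta>) (dv j b)))"
    proof -
      have a: "cinner (v b \<theta>) (lam k *v dv j b) = cinner (lam k *v v b \<theta>) (dv j b)" for b
        by (rule mv_herm[OF lam_herm])
      have c: "Re (cinner (dv j b) (lam k *v v b \<theta>)) = Re (cinner (lam k *v v b \<theta>) (dv j b))" for b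
        by (rule Re_cinner_sym)
      show ?thesis unfolding l Re_sum plus_complex.sel a c by (simp add: sum_distrib_left)
    qed
    have t: "trace (\<rho> \<theta> ** lam j ** lam k) = trace (lam k ** \<rho> \<theta> ** lam j)"
      by (simp add: trace_mul_sym[of "\<rho> \<theta> ** lam j" "lam k"] matrix_mul_assoc)
    have r: "Re (trace (((1/2) *\<^sub>R (\<rho> \<theta> ** lam j + lam j ** \<rho> \<theta>)) ** lam k)) = H$j$k"
      using H_sym[of j k] by (simp add: scaleR_mmult trace_scaleR matrix_add_rdistrib' trace_add t H_def')
    show ?thesis using l2 r e by simp
  qed
  define g where "g j b = 2 *\<^sub>R dv j b - lam j *v v b \<theta>" for j b
  define G where "G x b = (\<Sum>j\<in>UNIV. (x$j::real) *\<^sub>R g j b)" for x b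
  have gg: "(\<Sum>b\<in>UNIV. Re (cinner (g j b) (g k b))) = C$j$k - H$j$k" for j k
  proof -
    have "Re (cinner (g j b) (g k b)) = 4 * Re (cinner (dv j b) (dv k b))
       - 2 * Re (cinner (lam k *v v b \<theta>) (dv j b)) - 2 * Re (cinner (lam j *v v b \<theta>) (dv k b))
       + Re (cinner (lam j *v v b \<theta>) (lam k *v v b \<theta>))" for b
      by (simp add: g_def cinner_diff_left cinner_diff_right cinner_scaleR_left cinner_scaleR_right
          Re_cinner_sym[of "dv j b" "lam k *v v b \<theta>"])
    hence "(\<Sum>b\<in>UNIV. Re (cinner (g j b) (g k b))) = 4 * (\<Sum>b\<in>UNIV. Re (cinner (dv j b) (dv k b)))
       - 2 * (\<Sum>b\<in>UNIV. Re (cinner (lam k *v v b \<theta>) (dv j b))) - 2 * (\<Sum>b\<in>UNIV. Re (cinner (lam j *v v b \<theta>) (dv k b)))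
       + (\<Sum>b\<in>UNIV. Re (cinner (lam j *v v b \<theta>) (lam k *v v b \<theta>)))"
      by (simp add: sum.distrib sum_subtractf sum_distrib_left)
    thus ?thesis using F6[of k j] F6[of j k] H_sym[of j k] by (simp add: C_entry H_entry)
  qed
  have quad: "x \<bullet> ((C - H) *v x) = (\<Sum>b\<in>UNIV. Re (cinner (G x b) (G x b)))" for x
    unfolding G_def Re_cinner_sums triple_swap quad_form gg by simp
  have psd: "psd_le H C"
    unfolding psd_le_def quad by (auto intro: sum_nonneg cinner_self_ge0)
  have w_diff': "w b differentiable at \<theta>" for b using w_diff[OF theta_in] .
  have E: "cinner (pd l (w a) \<theta>) (w b \<theta>) + cinner (w a \<theta>) (pd l (w b) \<theta>) = 0" for l a b
  proof -
    have "pd l (\<lambda>t. cinner (w a t) (w b t)) \<theta> = 0"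
      by (rule pd_const_on[OF open_Theta theta_in]) (simp add: w_orthonormal)
    thus ?thesis by (simp add: pd_cinner[OF w_diff' w_diff'])
  qed
  have Hd: "cinner (pd l (w a) \<theta>) (v b \<theta>) + cinner (w a \<theta>) (dv l b) = 0" if "a \<noteq> b" for l a b
  proof -
    have "pd l (\<lambda>t. cinner (w a t) (v b t)) \<theta> = 0"
      by (rule pd_const_on[OF open_Theta theta_in]) (simp add: v_eq cinner_smult_right w_orthonormal that)
    thus ?thesis by (simp add: pd_cinner[OF w_diff' v_diff[OF theta_in]] dv_def)
  qed
  have Hs: "cinner (pd l (w a) \<theta>) (v a \<theta>) + cinner (w a \<theta>) (dv l a)
      = cinner (dv l a) (w a \<theta>) + cinner (v a \<theta>) (pd l (w a) \<theta>)" for l a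
  proof -
    have "pd l (\<lambda>t. cinner (w a t) (v a t)) \<theta> = pd l (\<lambda>t. cinner (v a t) (w a t)) \<theta>"
      by (rule pd_eq_on[OF diff_cinner[OF w_diff' v_diff[OF theta_in]] open_Theta theta_in])
         (simp add: v_eq cinner_smult_right cinner_smult_left w_orthonormal)
    thus ?thesis by (simp add: pd_cinner[OF w_diff' v_diff[OF theta_in]]
        pd_cinner[OF v_diff[OF theta_in] w_diff'] dv_def)
  qed
  have rho_th: "\<rho> \<theta> = (\<Sum>c\<in>UNIV. outer (v c \<theta>) (v c \<theta>))"
    by (simp add: \<rho>_def out_state_eq v_def)
  have wrho: "cinner (w a \<theta>) (\<rho> \<theta> *v y) = of_real (pr a \<theta>) * cinner (w a \<theta>) y" for a y
  proof -
    have "cinner (w a \<theta>) (\<rho> \<theta> *v y) = cinner (v a \<theta>) y * of_real (s a)"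
      by (simp add: rho_th mv_sum_left outer_mv cinner_sum_right cinner_smult_right wv if_distrib cong: if_cong)
    also have "\<dots> = of_real (pr a \<theta>) * cinner (w a \<theta>) y"
      by (simp add: v_th cinner_smult_left s_sq[symmetric])
    finally show ?thesis .
  qed
  have rhow: "\<rho> \<theta> *v w b \<theta> = of_real (pr b \<theta>) *s w b \<theta>" for b
  proof -
    have "\<rho> \<theta> *v w b \<theta> = of_real (s b) *s v b \<theta>"
    proof -
      have "cinner (v c \<theta>) (w b \<theta>) *s v c \<theta> = (if c = b then of_real (s b) *s v b \<theta> else 0)" for c
        by (simp add: vw)
      thus ?thesis by (simp add: rho_th mv_sum_left outer_mv)
    qed
    thus ?thesis by (simp add: v_th s_sq[symmetric])
  qed
  have S: "of_real (s b) * cinner (w a \<theta>) (dv l b) + of_real (s a) * cinner (dv l a) (w b \<theta>)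
      = of_real ((pr a \<theta> + pr b \<theta>)/2) * cinner (w a \<theta>) (lam l *v w b \<theta>)" for l a b
  proof -
    have e: "cinner (w a \<theta>) (pd l \<rho> \<theta> *v w b \<theta>)
      = cinner (w a \<theta>) (((1/2) *\<^sub>R (\<rho> \<theta> ** lam l + lam l ** \<rho> \<theta>)) *v w b \<theta>)"
      using lam_SLD[of l] by (simp add: \<rho>_def)
    have l: "cinner (w a \<theta>) (pd l \<rho> \<theta> *v w b \<theta>) = of_real (s b) * cinner (w a \<theta>) (dv l b) + of_real (s a) * cinner (dv l a) (w b \<theta>)"
    proof -
      have 1: "cinner (w a \<theta>) (cinner (v c \<theta>) (w b \<theta>) *s dv l c) = (if c = b then of_real (s b) * cinner (w a \<theta>) (dv l b) else 0)" for c
        by (simp add: vw cinner_smult_right)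
      have 2: "cinner (w a \<theta>) (cinner (dv l c) (w b \<theta>) *s v c \<theta>) = (if c = a then of_real (s a) * cinner (dv l a) (w b \<theta>) else 0)" for c
        by (auto simp: wv cinner_smult_right)
      show ?thesis by (simp add: rho_deriv mv_sum_left matrix_vector_mult_add_rdistrib outer_mv cinner_sum_right
          cinner_add_right 1 2 sum.distrib)
    qed
    have r: "cinner (w a \<theta>) (((1/2) *\<^sub>R (\<rho> \<theta> ** lam l + lam l ** \<rho> \<theta>)) *v w b \<theta>)
       = of_real ((pr a \<theta> + pr b \<theta>)/2) * cinner (w a \<theta>) (lam l *v w b \<theta>)"
      by (simp add: mv_scaleR matrix_vector_mult_add_rdistrib matrix_vector_mul_assoc[symmetric]
          cinner_scaleR_right cinner_add_right wrho rhow mv_smult cinner_smult_right algebra_simps)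
    show ?thesis using e l r by simp
  qed
  have cv: "cinner (pd l (w a) \<theta>) (v b \<theta>) = of_real (s b) * cinner (pd l (w a) \<theta>) (w b \<theta>)" for l a b
    by (simp add: v_th cinner_smult_right)
  have vc: "cinner (v a \<theta>) (pd l (w b) \<theta>) = of_real (s a) * cinner (w a \<theta>) (pd l (w b) \<theta>)" for l a b
    by (simp add: v_th cinner_smult_left)
  have lamv: "cinner u (lam l *v v b \<theta>) = of_real (s b) * cinner u (lam l *v w b \<theta>)" for u l b
    by (simp add: v_th mv_smult cinner_smult_right)
  have Mh: "cinner (lam l *v w a \<theta>) (w b \<theta>) = cinner (w a \<theta>) (lam l *v w b \<theta>)" for l a b
    by (rule mv_herm[OF lam_herm, symmetric])
  have Mc: "cinner (w b \<theta>) (lam l *v w a \<theta>) = cnj (cinner (w a \<theta>) (lam l *v w b \<theta>))" for l a b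
    by (simp add: cnj_cinner Mh[symmetric])
  have s_pos: "pr b \<theta> > 0 \<Longrightarrow> s b > 0" for b by (simp add: s_def)
  have key_iff: "(\<forall>l b. 2 *\<^sub>R dv l b = lam l *v v b \<theta>) \<longleftrightarrow>
      (\<forall>l j k. pr j \<theta> > 0 \<longrightarrow> pr k \<theta> > 0 \<longrightarrow> cinner (pd l (w j) \<theta>) (w k \<theta>) = 0)"
  proof
    assume K: "\<forall>l b. 2 *\<^sub>R dv l b = lam l *v v b \<theta>"
    have dvK: "dv l b = (1/2) *\<^sub>R (lam l *v v b \<theta>)" for l b
    proof -
      have "dv l b = (1/2) *\<^sub>R (2 *\<^sub>R dv l b)" by simp
      thus ?thesis using K by simp
    qed
    have hr: "cinner u (dv l b) = of_real (s b) / 2 * cinner u (lam l *v w b \<theta>)" for u l b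
      by (simp add: dvK cinner_scaleR_right lamv)
    have hl: "cinner (dv l b) u = of_real (s b) / 2 * cinner (lam l *v w b \<theta>) u" for u l b
      by (simp add: dvK cinner_scaleR_left v_th mv_smult cinner_smult_left)
    show "\<forall>l j k. pr j \<theta> > 0 \<longrightarrow> pr k \<theta> > 0 \<longrightarrow> cinner (pd l (w j) \<theta>) (w k \<theta>) = 0"
    proof (intro allI impI)
      fix l j k assume pj: "pr j \<theta> > 0" and pk: "pr k \<theta> > 0"
      define X where "X = cinner (pd l (w j) \<theta>) (w k \<theta>)"
      define Y where "Y = cinner (w j \<theta>) (pd l (w k) \<theta>)"
      define M where "M = cinner (w j \<theta>) (lam l *v w k \<theta>)"
      have sj: "complex_of_real (s j) \<noteq> 0" using s_pos[OF pj] by simp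
      have sk: "complex_of_real (s k) \<noteq> 0" using s_pos[OF pk] by simp
      have XY: "X + Y = 0" using E[of l j k] by (simp add: X_def Y_def)
      show "X = 0" unfolding X_def[symmetric]
      proof (cases "j = k")
        case False
        have "of_real (s k) * X + of_real (s k) / 2 * M = 0"
          using Hd[OF False, of l] by (simp only: cv hr X_def M_def)
        hence "of_real (s k) * (X + M / 2) = 0" by (simp add: algebra_simps)
        hence 1: "X + M / 2 = 0" using sk by simp
        have a1: "cinner (pd l (w k) \<theta>) (w j \<theta>) = cnj Y" by (simp add: Y_def cnj_cinner)
        have a2: "cinner (w k \<theta>) (lam l *v w j \<theta>) = cnj M" unfolding M_def by (rule Mc)
        have "of_real (s j) * cnj Y + of_real (s j) / 2 * cnj M = 0"
          using Hd[OF not_sym[OF False], of l] by (simp only: cv hr a1 a2)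
        hence "of_real (s j) * (cnj Y + cnj M / 2) = 0" by (simp add: algebra_simps)
        hence "cnj Y + cnj M / 2 = 0" using sj by simp
        hence "cnj (Y + M / 2) = 0" by simp
        hence "Y + M / 2 = 0" by (simp only: complex_cnj_zero_iff)
        hence y: "Y = - (M / 2)" by (simp add: add_eq_0_iff)
        have x: "X = - (M / 2)" using 1 by (simp add: add_eq_0_iff)
        have "M = 0" using XY unfolding x y by simp
        thus ?thesis using x by simp
      next
        case True
        have "of_real (s j) * X + of_real (s j) / 2 * M = of_real (s j) / 2 * M + of_real (s j) * Y"
          using Hs[of l k] unfolding X_def Y_def M_def True by (simp only: cv hr hl vc Mh)
        hence "of_real (s j) * (X - Y) = 0" by (simp add: algebra_simps)
        hence "X = Y" using sj by simp
        with XY show ?thesis by simp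
      qed
    qed
  next
    assume cond: "\<forall>l j k. pr j \<theta> > 0 \<longrightarrow> pr k \<theta> > 0 \<longrightarrow> cinner (pd l (w j) \<theta>) (w k \<theta>) = 0"
    show "\<forall>l b. 2 *\<^sub>R dv l b = lam l *v v b \<theta>"
    proof (intro allI)
      fix l b
      show "2 *\<^sub>R dv l b = lam l *v v b \<theta>"
      proof (cases "pr b \<theta> = 0")
        case True
        thus ?thesis using zero_case[OF True, of l] by simp
      next
        case pb0: False
        hence pb: "pr b \<theta> > 0" using pr_nn[of b] by simp
        have sb: "complex_of_real (s b) \<noteq> 0" using s_pos[OF pb] by simp
        show ?thesis
        proof (rule onb_ext[OF wo])
          fix a
          define M where "M = cinner (w a \<theta>) (lam l *v w b \<theta>)"
          have R: "cinner (w a \<theta>) (lam l *v v b \<theta>) = of_real (s b) * M"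
            by (simp add: lamv M_def)
          have Sab: "of_real (s b) * cinner (w a \<theta>) (dv l b) + of_real (s a) * cinner (dv l a) (w b \<theta>)
              = of_real ((pr a \<theta> + pr b \<theta>)/2) * M"
            using S[of b a l] by (simp add: M_def)
          have goal: "2 * cinner (w a \<theta>) (dv l b) = of_real (s b) * M"
          proof (cases "pr a \<theta> = 0")
            case True
            hence "s a = 0" by (simp add: s_def)
            hence "of_real (s b) * cinner (w a \<theta>) (dv l b) = of_real (s b * s b / 2) * M"
              using Sab True by (simp add: s_sq)
            hence "of_real (s b) * (2 * cinner (w a \<theta>) (dv l b) - of_real (s b) * M) = 0"
              by (simp add: algebra_simps)
            thus ?thesis using sb by simp
          next
            case pa0: False
            hence pa: "pr a \<theta> > 0" using pr_nn[of a] by simp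
            have X1: "cinner (pd l (w a) \<theta>) (w b \<theta>) = 0" using cond pa pb by blast
            have X2: "cinner (pd l (w b) \<theta>) (w a \<theta>) = 0" using cond pa pb by blast
            have Y1: "cinner (w a \<theta>) (pd l (w b) \<theta>) = 0" using E[of l a b] X1 by simp
            show ?thesis
            proof (cases "a = b")
              case False
              have d1: "cinner (w a \<theta>) (dv l b) = 0" using Hd[OF False, of l] by (simp add: cv X1)
              have "cinner (w b \<theta>) (dv l a) = 0" using Hd[of b a l] False by (simp add: cv X2)
              hence d2: "cinner (dv l a) (w b \<theta>) = 0" by (metis cnj_cinner complex_cnj_zero)
              have "of_real ((pr a \<theta> + pr b \<theta>)/2) * M = 0" using Sab d1 d2 by simp
              moreover have "complex_of_real ((pr a \<theta> + pr b \<theta>)/2) \<noteq> 0"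
              proof -
                have ne: "(pr a \<theta> + pr b \<theta>)/2 \<noteq> 0" using pa pb by simp
                show ?thesis using ne of_real_eq_0_iff by blast
              qed
              ultimately have "M = 0" by simp
              thus ?thesis using d1 by simp
            next
              case True
              have Xaa: "cinner (pd l (w a) \<theta>) (w a \<theta>) = 0" using X1 True by simp
              have Yaa: "cinner (w a \<theta>) (pd l (w a) \<theta>) = 0" using Y1 True by simp
              have eqd: "cinner (w a \<theta>) (dv l a) = cinner (dv l a) (w a \<theta>)"
                using Hs[of l a] by (simp add: cv vc Xaa Yaa)
              have "of_real (s a) * (2 * cinner (w a \<theta>) (dv l a) - of_real (s a) * M) = 0"
                using Sab True eqd by (simp add: s_sq[symmetric] algebra_simps)
              moreover have "complex_of_real (s a) \<noteq> 0" using s_pos[OF pa] by simp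
              ultimately show ?thesis using True by simp
            qed
          qed
          show "cinner (w a \<theta>) (2 *\<^sub>R dv l b) = cinner (w a \<theta>) (lam l *v v b \<theta>)"
            by (simp add: cinner_scaleR_right R goal)
        qed
      qed
    qed
  qed
  have eq_iff: "H = C \<longleftrightarrow> (\<forall>l b. 2 *\<^sub>R dv l b = lam l *v v b \<theta>)"
  proof
    assume HC: "H = C"
    show "\<forall>l b. 2 *\<^sub>R dv l b = lam l *v v b \<theta>"
    proof (intro allI)
      fix l b
      have "(\<Sum>b\<in>UNIV. Re (cinner (g l b) (g l b))) = 0" using gg[of l l] HC by simp
      hence "\<forall>b\<in>UNIV. Re (cinner (g l b) (g l b)) = 0"
        by (subst (asm) sum_nonneg_eq_0_iff) (auto intro: cinner_self_ge0)
      hence "g l b = 0" using cinner_self_zero by blast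
      thus "2 *\<^sub>R dv l b = lam l *v v b \<theta>" by (simp add: g_def)
    qed
  next
    assume "\<forall>l b. 2 *\<^sub>R dv l b = lam l *v v b \<theta>"
    hence "g l b = 0" for l b by (simp add: g_def)
    hence "C$j$k - H$j$k = 0" for j k using gg[of j k] by simp
    thus "H = C" by (simp add: vec_eq_iff)
  qed
  show ?thesis using psd eq_iff key_iff by (simp add: C_def H_def \<rho>_def)
qed

end
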